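(* Let $b\in\mathbb N$, $b\ge 2$. Then there exists $m\in\mathbb N$ such that $m$ is antipalindromic in base $b$ and also antipalindromic in at least one other integer base $c\ge 2$ with $c\neq b$ and $c<m$.
   Context: For an integer $b\ge 2$, every natural number $x$ has a unique base-$b$ expansion $x=a_\ell b^\ell+\dots+a_1b+a_0$ with $a_0,\dots,a_\ell\in\{0,1,\dots,b-1\}$ and $a_\ell\neq 0$. The number $x$ is antipalindromic in base $b$ if $a_j=b-1-a_{\ell-j}$ for all $j\in\{0,1,\dots,\ell\}$. *)

theory Defs
  imports Main
begin

fun digits :: "nat \<Rightarrow> nat \<Rightarrow> nat list" where
  "digits b x = (if b < 2 \<or> x = 0 then [] else x mod b # digits b (x div b))"

definition antipalindromic :: "nat \<Rightarrow> nat \<Rightarrow> bool" where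
  "antipalindromic b x \<longleftrightarrow> b \<ge> 2 \<and> x > 0 \<and>
     (let ds = digits b x; l = length ds - 1 in
        \<forall>j \<le> l. int (ds ! j) = int b - 1 - int (ds ! (l - j)))"

end

theory Submission imports Defs begin
lemma digits_two0:
  assumes "c \<ge> 2" "1 \<le> a" "a < c" "r < c"
  shows "digits c (a*c + r) = [r, a]"
proof -
  have m: "(a*c + r) mod c = r" using assms by simp
  have d: "(a*c + r) div c = a" using assms by simp
  have "digits c a = [a]"
    using assms by (subst digits.simps) simp
  moreover have "a*c + r \<noteq> 0" using assms by simp
  ultimately show ?thesis using assms m d
    by (subst digits.simps) simp
qed
lemma anti_two0:
  assumes "c \<ge> 2" "1 \<le> a" "a < c" "r + a + 1 = c"
  shows "antipalindromic c (a*c + r)"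
proof -
  have r: "r < c" using assms by simp
  have D: "digits c (a*c + r) = [r, a]" using digits_two0[OF assms(1-3) r] .
  have "\<forall>j\<le>1. int ([r, a] ! j) = int c - 1 - int ([r, a] ! (1 - j))"
  proof (intro allI impI)
    fix j :: nat assume "j \<le> 1"
    then have "j = 0 \<or> j = 1" by auto
    then show "int ([r, a] ! j) = int c - 1 - int ([r, a] ! (1 - j))"
      using assms(4) by auto
  qed
  moreover have "a*c + r > 0" using assms by simp
  moreover have L: "length [r, a] - 1 = 1" by simp
  ultimately show ?thesis using assms(1)
    unfolding antipalindromic_def Let_def D L by blast
qed
lemma ten_bin: "antipalindromic 2 10"
proof -
  have "digits 2 0 = []" by (subst digits.simps) simp
  hence "digits 2 1 = [1]" by (subst digits.simps) simp
  hence "digits 2 2 = [0,1]" by (subst digits.simps) simp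
  hence "digits 2 5 = [1,0,1]" by (subst digits.simps) simp
  hence "digits 2 10 = [0,1,0,1]" by (subst digits.simps) simp
  then show ?thesis unfolding antipalindromic_def Let_def
    by (auto simp: le_Suc_eq)
qed

theorem mainTheorem15:
  fixes b :: nat
  assumes "b \<ge> 2"
  shows "\<exists>m::nat. antipalindromic b m \<and>
           (\<exists>c::nat. c \<ge> 2 \<and> c \<noteq> b \<and> c < m \<and> antipalindromic c m)"
proof (cases "b = 2")
  case True
  have "antipalindromic 6 (1*6 + 4)" by (rule anti_two0) auto
  hence P: "antipalindromic 6 10" by simp
  show ?thesis
    apply (rule exI[of _ 10], rule conjI)
     apply (simp only: True ten_bin)
    apply (rule exI[of _ 6])
    using True P by simp
next
  case False
  hence b3: "b \<ge> 3" using assms by simp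
  define m where "m = (b-1)*b + 0"
  have A: "antipalindromic b m" unfolding m_def by (rule anti_two0) (use b3 in auto)
  have ev: "even (b*(b-1))" by (cases "even b") auto
  define c where "c = b*(b-1) div 2 + 1"
  have c2: "2*(c-1) = b*(b-1)" unfolding c_def using ev by simp
  have mm: "m = b*(b-1)" unfolding m_def by simp
  have "b*(b-1) \<ge> 3*2" using b3 by (intro mult_mono) auto
  hence cge: "c \<ge> 4" using c2 by linarith
  have m2: "m = 1*c + (c-2)" using c2 mm cge by simp
  have B: "antipalindromic c (1*c + (c-2))" by (rule anti_two0) (use cge in auto)
  have "c \<noteq> b"
  proof
    assume "c = b"
    then have "2*(b-1) = b*(b-1)" using c2 by simp
    then show False using b3 by simp
  qed
  moreover have "c < m" using c2 mm cge by linarith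
  ultimately show ?thesis
    apply -
    apply (rule exI[of _ m], rule conjI, rule A)
    apply (rule exI[of _ c])
    using cge B m2 by simp
qed

end
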